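(* Let $\vec d=(\vec a,\vec b)$ be a bidegree sequence of length $n$ with $\sum_{i=1}^n a_i=\sum_{i=1}^n b_i=n\bar c$. Suppose $M_a,M_b\in\mathbb{N}$ satisfy $\max_i a_i\le M_a$, $\max_i b_i\le M_b$ and $(M_a+1)M_b\le n\bar c$. Then $\vec d$ is graphic. In particular, if $\max\vec d\le\sqrt{\tfrac14+n\bar c}-\tfrac12$, then $\vec d$ is graphic.
   Context: A bidegree sequence of length $n$ is a pair $\vec d=(\vec a,\vec b)$ with $\vec a=(a_1,\dots,a_n)\in\mathbb{N}_0^n$ and $\vec b=(b_1,\dots,b_n)\in\mathbb{N}_0^n$. It is graphic with loops if there is an $n\times n$ matrix with entries in $\{0,1\}$ whose $i$th row sum is $a_i$ and whose $i$th column sum is $b_i$ for every $i\in[1..n]$; it is graphic if such a matrix exists with all diagonal entries equal to $0$. $\max\vec d$ and $\min\vec d$ denote the maximum and minimum over all $2n$ entries $a_1,\dots,a_n,b_1,\dots,b_n$. The number $\bar c$ (the average degree) is defined by $\sum_i a_i=\sum_i b_i=n\bar c$. *)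

theory Defs
  imports Complex_Main
begin

text \<open>A bidegree sequence of length n is a pair of functions a b :: nat \<Rightarrow> nat,
  read on the index set {..<n} (i.e. indices 0..n-1 instead of 1..n).\<close>

definition graphic :: "nat \<Rightarrow> (nat \<Rightarrow> nat) \<Rightarrow> (nat \<Rightarrow> nat) \<Rightarrow> bool" where
  "graphic n a b \<longleftrightarrow> (\<exists>M :: nat \<Rightarrow> nat \<Rightarrow> nat.
     (\<forall>i<n. \<forall>j<n. M i j \<in> {0, 1}) \<and>
     (\<forall>i<n. M i i = 0) \<and>
     (\<forall>i<n. (\<Sum>j<n. M i j) = a i) \<and>
     (\<forall>j<n. (\<Sum>i<n. M i j) = b j))"

definition max_bideg :: "nat \<Rightarrow> (nat \<Rightarrow> nat) \<Rightarrow> (nat \<Rightarrow> nat) \<Rightarrow> nat" where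
  "max_bideg n a b = Max (a ` {..<n} \<union> b ` {..<n})"

end

theory Submission
  imports Defs
begin


definition rs :: "nat \<Rightarrow> (nat\<Rightarrow>nat\<Rightarrow>nat) \<Rightarrow> nat \<Rightarrow> nat" where "rs n M i = (\<Sum>j<n. M i j)"
definition cs :: "nat \<Rightarrow> (nat\<Rightarrow>nat\<Rightarrow>nat) \<Rightarrow> nat \<Rightarrow> nat" where "cs n M j = (\<Sum>i<n. M i j)"
definition shp :: "nat \<Rightarrow> (nat\<Rightarrow>nat\<Rightarrow>nat) \<Rightarrow> bool" where
  "shp n M \<longleftrightarrow> (\<forall>i<n. \<forall>j<n. M i j \<le> 1) \<and> (\<forall>i<n. M i i = 0)"
definition valid :: "nat \<Rightarrow> (nat\<Rightarrow>nat) \<Rightarrow> (nat\<Rightarrow>nat) \<Rightarrow> (nat\<Rightarrow>nat\<Rightarrow>nat) \<Rightarrow> bool" where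
  "valid n a b M \<longleftrightarrow> shp n M \<and> (\<forall>i<n. rs n M i \<le> a i) \<and> (\<forall>j<n. cs n M j \<le> b j)"
definition tot :: "nat \<Rightarrow> (nat\<Rightarrow>nat\<Rightarrow>nat) \<Rightarrow> nat" where "tot n M = (\<Sum>j<n. cs n M j)"
definition upd :: "(nat\<Rightarrow>nat\<Rightarrow>nat) \<Rightarrow> nat \<Rightarrow> nat \<Rightarrow> nat \<Rightarrow> nat\<Rightarrow>nat\<Rightarrow>nat" where
  "upd M k l v = (\<lambda>i j. if i = k \<and> j = l then v else M i j)"

lemma rs_upd:
  assumes "k<n" "l<n"
  shows "rs n (upd M k l v) i + (if i=k then M k l else 0) = rs n M i + (if i=k then v else 0)"
proof (cases "i = k")
  case True
  have "rs n (upd M k l v) i = v + (\<Sum>j\<in>{..<n}-{l}. M k j)"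
    unfolding rs_def upd_def using assms True by (simp add: sum.remove[of "{..<n}" l])
  moreover have "rs n M i = M k l + (\<Sum>j\<in>{..<n}-{l}. M k j)"
    unfolding rs_def using assms True by (simp add: sum.remove[of "{..<n}" l])
  ultimately show ?thesis using True by simp
next
  case False
  then show ?thesis unfolding rs_def upd_def by simp
qed

lemma cs_upd:
  assumes "k<n" "l<n"
  shows "cs n (upd M k l v) j + (if j=l then M k l else 0) = cs n M j + (if j=l then v else 0)"
proof (cases "j = l")
  case True
  have "cs n (upd M k l v) j = v + (\<Sum>i\<in>{..<n}-{k}. M i l)"
    unfolding cs_def upd_def using assms True by (simp add: sum.remove[of "{..<n}" k])
  moreover have "cs n M j = M k l + (\<Sum>i\<in>{..<n}-{k}. M i l)"
    unfolding cs_def using assms True by (simp add: sum.remove[of "{..<n}" k])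
  ultimately show ?thesis using True by simp
next
  case False
  then show ?thesis unfolding cs_def upd_def by simp
qed

lemma tot_rs: "tot n M = (\<Sum>i<n. rs n M i)"
  unfolding tot_def rs_def cs_def by (rule sum.swap)

lemma sum_eq_le:
  fixes f g :: "nat \<Rightarrow> nat"
  assumes "finite A" "\<forall>x\<in>A. f x \<le> g x" "sum f A = sum g A" "x \<in> A"
  shows "f x = g x"
proof (rule ccontr)
  assume "f x \<noteq> g x"
  then have "sum f A < sum g A"
    using assms by (intro sum_strict_mono_ex1) (auto intro: le_neq_implies_less)
  then show False using assms by simp
qed

inductive reach :: "nat \<Rightarrow> (nat\<Rightarrow>nat) \<Rightarrow> (nat\<Rightarrow>nat\<Rightarrow>nat) \<Rightarrow> nat \<Rightarrow> nat set \<Rightarrow> bool"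
  for n a M where
  base: "k<n \<Longrightarrow> rs n M k < a k \<Longrightarrow> reach n a M k {}"
| step: "reach n a M k Z \<Longrightarrow> l<n \<Longrightarrow> l\<notin>Z \<Longrightarrow> l\<noteq>k \<Longrightarrow> M k l = 0 \<Longrightarrow> k2<n \<Longrightarrow> M k2 l = 1
     \<Longrightarrow> reach n a M k2 (insert l Z)"

lemma reach_lt: "reach n a M k Z \<Longrightarrow> k < n"
  by (induction rule: reach.induct) auto

lemma reach_Z: "reach n a M k Z \<Longrightarrow> l \<in> Z \<Longrightarrow>
   \<exists>k' Z'. reach n a M k' Z' \<and> l \<notin> Z' \<and> l \<noteq> k' \<and> M k' l = 0 \<and> l < n"
  by (induction rule: reach.induct) auto

lemma reach_inv:
  assumes "reach n a M k Z" "valid n a b M"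
  shows "\<exists>M'. shp n M' \<and> (\<forall>i<n. rs n M' i \<le> a i) \<and> (\<forall>j<n. cs n M' j = cs n M j)
     \<and> rs n M' k < a k \<and> (\<forall>i<n. \<forall>j<n. j \<notin> Z \<longrightarrow> M' i j = M i j)"
  using assms
proof (induction rule: reach.induct)
  case (base k)
  then show ?case unfolding valid_def by auto
next
  case (step k Z l k2)
  from step obtain M' where sh: "shp n M'" and r: "\<forall>i<n. rs n M' i \<le> a i"
    and c: "\<forall>j<n. cs n M' j = cs n M j" and rk: "rs n M' k < a k"
    and ag: "\<forall>i<n. \<forall>j<n. j \<notin> Z \<longrightarrow> M' i j = M i j" by blast
  have kn: "k < n" using step reach_lt by blast
  have m1: "M' k l = 0" using ag step kn by auto
  have m2: "M' k2 l = 1" using ag step by auto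
  have kk: "k \<noteq> k2" using step by auto
  define N1 where "N1 = upd M' k l 1"
  define N where "N = upd N1 k2 l 0"
  have N1kl: "N1 k2 l = 1" using kk m2 unfolding N1_def upd_def by simp
  have rN1: "rs n N1 i + 0 = rs n M' i + (if i=k then 1 else 0)" for i
    using rs_upd[OF kn \<open>l<n\<close>, of M' 1 i] m1 unfolding N1_def by (auto split: if_splits)
  have rN: "rs n N i + (if i=k2 then 1 else 0) = rs n N1 i" for i
    using rs_upd[OF \<open>k2<n\<close> \<open>l<n\<close>, of N1 0 i] N1kl unfolding N_def by (auto split: if_splits)
  have cN1: "cs n N1 j = cs n M' j + (if j=l then 1 else 0)" for j
    using cs_upd[OF kn \<open>l<n\<close>, of M' 1 j] m1 unfolding N1_def by (auto split: if_splits)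
  have cN: "cs n N j + (if j=l then 1 else 0) = cs n N1 j" for j
    using cs_upd[OF \<open>k2<n\<close> \<open>l<n\<close>, of N1 0 j] N1kl unfolding N_def by (auto split: if_splits)
  have "shp n N" using sh step unfolding shp_def N_def N1_def upd_def by auto
  moreover have "\<forall>i<n. rs n N i \<le> a i"
  proof (intro allI impI)
    fix i assume "i<n"
    show "rs n N i \<le> a i"
      using rN[of i] rN1[of i] r \<open>i<n\<close> rk kk by (auto split: if_splits)
  qed
  moreover have "\<forall>j<n. cs n N j = cs n M j"
    using cN cN1 c by (metis add_right_cancel)
  moreover have "rs n N k2 < a k2"
    using rN[of k2] rN1[of k2] r \<open>k2<n\<close> kk by (auto split: if_splits)
  moreover have "\<forall>i<n. \<forall>j<n. j \<notin> insert l Z \<longrightarrow> N i j = M i j"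
    using ag unfolding N_def N1_def upd_def by auto
  ultimately show ?case by blast
qed



lemma main:
  fixes n Ma Mb :: nat and a b :: "nat \<Rightarrow> nat"
  assumes sab: "(\<Sum>i<n. a i) = (\<Sum>i<n. b i)"
    and aM: "\<forall>i<n. a i \<le> Ma" and bM: "\<forall>i<n. b i \<le> Mb"
    and cond: "(Ma+1)*Mb \<le> (\<Sum>i<n. a i)"
  shows "graphic n a b"
proof -
  have V0: "valid n a b (\<lambda>i j. 0)"
    by (simp add: valid_def shp_def rs_def cs_def)
  have Vb: "\<forall>N. valid n a b N \<longrightarrow> tot n N < (\<Sum>i<n. b i) + 1"
    unfolding tot_def valid_def by (auto simp: less_Suc_eq_le intro: sum_mono)
  obtain M where vM: "valid n a b M" and maxM0: "\<forall>N. valid n a b N \<longrightarrow> tot n N \<le> tot n M"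
    using ex_has_greatest_nat[OF V0 Vb] by blast
  have maxM: "tot n N \<le> tot n M" if "valid n a b N" for N using maxM0 that by blast
  have sh: "shp n M" and rle: "\<forall>i<n. rs n M i \<le> a i" and cle: "\<forall>j<n. cs n M j \<le> b j"
    using vM unfolding valid_def by auto
  have tle: "tot n M \<le> (\<Sum>i<n. a i)" using cle sab unfolding tot_def by (auto intro: sum_mono)
  show ?thesis
  proof (cases "tot n M = (\<Sum>i<n. a i)")
    case True
    have "\<forall>i<n. rs n M i = a i"
      using sum_eq_le[of "{..<n}" "rs n M" a] rle True tot_rs[of n M] by auto
    moreover have "\<forall>j<n. cs n M j = b j"
      using sum_eq_le[of "{..<n}" "cs n M" b] cle True sab unfolding tot_def by auto
    ultimately show ?thesis using sh unfolding graphic_def shp_def rs_def cs_def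
      by (intro exI[of _ M]) (auto simp: le_Suc_eq)
  next
    case False
    then have tlt: "tot n M < (\<Sum>i<n. a i)" using tle by simp
    have "\<exists>i0. i0 < n \<and> rs n M i0 < a i0"
    proof (rule ccontr)
      assume "\<nexists>i0. i0 < n \<and> rs n M i0 < a i0"
      then have "\<forall>i<n. rs n M i = a i" using rle by (meson le_neq_implies_less)
      then have "tot n M = (\<Sum>i<n. a i)" using tot_rs[of n M] by simp
      then show False using tlt by simp
    qed
    then obtain i0 where i0: "i0 < n" "rs n M i0 < a i0" by blast
    define X where "X = {k. \<exists>Z. reach n a M k Z}"
    define Y where "Y = {l. l < n \<and> (\<exists>k Z. reach n a M k Z \<and> l \<notin> Z \<and> l \<noteq> k \<and> M k l = 0)}"
    define Yc where "Yc = {..<n} - Y"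
    have Xn: "X \<subseteq> {..<n}" unfolding X_def using reach_lt by blast
    have Yn: "Y \<subseteq> {..<n}" unfolding Y_def by blast
    have i0X: "i0 \<in> X" unfolding X_def using reach.base[of i0 n M a, OF i0] by blast
    have finX: "finite X" using Xn finite_subset by blast
    have finY: "finite Y" using Yn finite_subset by blast
    have finYc: "finite Yc" unfolding Yc_def by simp
    have Yfull: "cs n M l = b l" if "l \<in> Y" for l
    proof (rule ccontr)
      assume ne: "cs n M l \<noteq> b l"
      from that obtain k Z where rk: "reach n a M k Z" and lZ: "l \<notin> Z" "l \<noteq> k" "M k l = 0" and ln: "l<n"
        unfolding Y_def by blast
      have kn: "k<n" using reach_lt[OF rk] .
      obtain M' where sh': "shp n M'" and r': "\<forall>i<n. rs n M' i \<le> a i"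
        and c': "\<forall>j<n. cs n M' j = cs n M j" and rk': "rs n M' k < a k"
        and ag: "\<forall>i<n. \<forall>j<n. j \<notin> Z \<longrightarrow> M' i j = M i j"
        using reach_inv[OF rk vM] by blast
      have m0: "M' k l = 0" using ag lZ kn ln by auto
      define N where "N = upd M' k l 1"
      have rN: "rs n N i = rs n M' i + (if i=k then 1 else 0)" for i
        using rs_upd[OF kn ln, of M' 1 i] m0 unfolding N_def by (auto split: if_splits)
      have cN: "cs n N j = cs n M' j + (if j=l then 1 else 0)" for j
        using cs_upd[OF kn ln, of M' 1 j] m0 unfolding N_def by (auto split: if_splits)
      have "valid n a b N"
        unfolding valid_def
      proof (intro conjI allI impI)
        show "shp n N" using sh' lZ unfolding shp_def N_def upd_def by auto
      next
        fix i assume "i<n" then show "rs n N i \<le> a i" using rN r' rk' by (auto split: if_splits)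
      next
        fix j assume "j<n" then show "cs n N j \<le> b j" using cN c' cle ne ln
          by (auto split: if_splits simp: le_neq_implies_less Suc_le_eq)
      qed
      moreover have "tot n N = tot n M + 1"
      proof -
        have "tot n N = (\<Sum>j<n. cs n M j + (if j=l then 1 else 0))"
          unfolding tot_def using cN c' by simp
        also have "\<dots> = tot n M + 1" unfolding tot_def using ln by (simp add: sum.distrib)
        finally show ?thesis .
      qed
      ultimately show False using maxM by fastforce
    qed
    have Yrows: "k \<in> X" if "l \<in> Y" "k < n" "M k l = 1" for k l
    proof -
      from that obtain k' Z where "reach n a M k' Z" "l \<notin> Z" "l \<noteq> k'" "M k' l = 0" "l<n"
        unfolding Y_def by blast
      then have "reach n a M k (insert l Z)" using reach.step that by blast
      then show ?thesis unfolding X_def by blast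
    qed
    have Xcols: "l \<in> Y" if "k \<in> X" "l < n" "l \<noteq> k" "M k l = 0" for k l
    proof -
      from that obtain Z where rZ: "reach n a M k Z" unfolding X_def by blast
      show ?thesis
      proof (cases "l \<in> Z")
        case True
        then show ?thesis using reach_Z[OF rZ True] unfolding Y_def by blast
      next
        case False
        then show ?thesis using rZ that unfolding Y_def by blast
      qed
    qed
    define x where "x = card X"
    define y where "y = card Yc"
    define z where "z = card (X \<inter> Yc)"
    define e where "e = (\<Sum>k\<in>X. \<Sum>l\<in>Yc. M k l)"
    define BY where "BY = (\<Sum>l\<in>Y. b l)"
    define BC where "BC = (\<Sum>l\<in>Yc. b l)"
    define A where "A = (\<Sum>k\<in>X. a k)"
    define S where "S = (\<Sum>i<n. a i)"
    have SBB: "S = BY + BC" unfolding S_def BY_def BC_def Yc_def sab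
      using Yn sum.subset_diff[of Y "{..<n}" b] by simp
    have rows_split: "(\<Sum>k\<in>X. rs n M k) = (\<Sum>k\<in>X. \<Sum>l\<in>Y. M k l) + e"
    proof -
      have "rs n M k = (\<Sum>l\<in>Y. M k l) + (\<Sum>l\<in>Yc. M k l)" for k
        unfolding rs_def Yc_def using Yn sum.subset_diff[of Y "{..<n}" "M k"] by simp
      then show ?thesis unfolding e_def by (simp add: sum.distrib)
    qed
    have partY: "(\<Sum>k\<in>X. \<Sum>l\<in>Y. M k l) = BY"
    proof -
      have "(\<Sum>k\<in>X. \<Sum>l\<in>Y. M k l) = (\<Sum>l\<in>Y. \<Sum>k\<in>X. M k l)" by (rule sum.swap)
      also have "\<dots> = (\<Sum>l\<in>Y. cs n M l)"
      proof (rule sum.cong[OF refl])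
        fix l assume lY: "l \<in> Y"
        have "(\<Sum>k\<in>X. M k l) = (\<Sum>k<n. M k l)"
        proof (rule sum.mono_neutral_left)
          show "\<forall>i\<in>{..<n} - X. M i l = 0"
          proof
            fix i assume "i \<in> {..<n} - X"
            moreover have "M i l \<le> 1" using sh Yn lY \<open>i \<in> {..<n} - X\<close> unfolding shp_def by auto
            ultimately show "M i l = 0" using Yrows[OF lY] by (auto simp: le_Suc_eq)
          qed
        qed (use Xn in auto)
        then show "(\<Sum>k\<in>X. M k l) = cs n M l" unfolding cs_def .
      qed
      also have "\<dots> = BY" unfolding BY_def using Yfull by simp
      finally show ?thesis .
    qed
    have ez: "e + z = x * y"
    proof -
      have inner: "(\<Sum>l\<in>Yc. M k l) + (if k \<in> Yc then 1 else 0) = y" if kX: "k \<in> X" for k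
      proof -
        have "(\<Sum>l\<in>Yc. M k l) = (\<Sum>l\<in>Yc. if l = k then 0 else 1)"
        proof (rule sum.cong[OF refl])
          fix l assume lYc: "l \<in> Yc"
          show "M k l = (if l = k then 0 else 1)"
          proof (cases "l = k")
            case True then show ?thesis using sh Xn kX unfolding shp_def by auto
          next
            case False
            have "M k l \<le> 1" using sh Xn kX lYc unfolding shp_def Yc_def by auto
            moreover have "M k l \<noteq> 0" using Xcols[OF kX _ False] lYc unfolding Yc_def by auto
            ultimately show ?thesis using False by auto
          qed
        qed
        also have "\<dots> = card (Yc - {k})"
          using finYc by (simp add: sum.If_cases Diff_eq)
        finally have cc: "(\<Sum>l\<in>Yc. M k l) = card (Yc - {k})" .
        show ?thesis
        proof (cases "k \<in> Yc")
          case True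
          then have "card Yc > 0" using finYc card_gt_0_iff by blast
          then show ?thesis using True finYc cc by (simp add: card_Diff_singleton_if y_def)
        qed (simp add: cc y_def)
      qed
      have "e + z = (\<Sum>k\<in>X. (\<Sum>l\<in>Yc. M k l) + (if k \<in> Yc then 1 else 0))"
        unfolding e_def z_def using finX by (simp add: sum.distrib sum.If_cases Int_commute)
      also have "\<dots> = (\<Sum>k\<in>X. y)" using inner by simp
      finally show ?thesis unfolding x_def by simp
    qed
    have zx: "z \<le> x" unfolding z_def x_def using finX by (simp add: card_mono)
    have zy: "z \<le> y" unfolding z_def y_def using finYc by (simp add: card_mono)
    have AS: "A \<le> S" unfolding A_def S_def using Xn by (simp add: sum_mono2)
    have Ax: "A \<le> x * Ma" unfolding A_def x_def using aM Xn sum_bounded_above[of X a Ma] by auto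
    have By: "BC \<le> y * Mb" unfolding BC_def y_def Yc_def using bM sum_bounded_above[of "{..<n} - Y" b Mb] by auto
    have SS: "(Ma+1)*Mb \<le> S" using cond unfolding S_def .
    have strict: "(\<Sum>k\<in>X. rs n M k) < A"
      unfolding A_def using finX i0X i0 rle Xn by (intro sum_strict_mono_ex1) auto
    have lt: "BY + e < A" using strict rows_split partY by simp
    have False
    proof (cases "Mb + 1 \<le> x")
      case True
      have "y * Mb + y \<le> y * x" using mult_le_mono2[OF True, of y] by (simp add: algebra_simps)
      then show False using lt AS SBB By ez zy by (simp add: mult.commute)
    next
      case False
      show False
      proof (cases "Ma + 1 \<le> y")
        case True
        have "x * Ma + x \<le> x * y" using mult_le_mono2[OF True, of x] by (simp add: algebra_simps)
        then show False using lt Ax ez zx by linarith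
      next
        case F2: False
        have "int x * int Ma + int y * int Mb \<le> int Ma * int Mb + int x * int y"
        proof -
          have "0 \<le> (int Ma - int y) * (int Mb - int x)" using False F2 by simp
          then show ?thesis by (simp add: algebra_simps)
        qed
        then have "x * Ma + y * Mb \<le> Ma * Mb + x * y" by (simp add: mult.commute) (metis of_nat_add of_nat_le_iff of_nat_mult)
        moreover have "A + BC \<le> x * Ma + y * Mb" using Ax By by simp
        moreover have "(Ma+1)*Mb = Ma*Mb + Mb" by simp
        ultimately show False using lt SS SBB ez zx False by linarith
      qed
    qed
    then show ?thesis by simp
  qed
qed


theorem theorem4:
  fixes n :: nat and a b :: "nat \<Rightarrow> nat" and cbar :: real
  assumes "real (\<Sum>i<n. a i) = real n * cbar"
    and "real (\<Sum>i<n. b i) = real n * cbar"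
  shows "(\<forall>Ma Mb :: nat. (\<forall>i<n. a i \<le> Ma) \<and> (\<forall>i<n. b i \<le> Mb) \<and>
            real ((Ma + 1) * Mb) \<le> real n * cbar \<longrightarrow> graphic n a b)
       \<and> (real (max_bideg n a b) \<le> sqrt (1/4 + real n * cbar) - 1/2 \<longrightarrow> graphic n a b)"
proof -
  have "real (\<Sum>i<n. a i) = real (\<Sum>i<n. b i)" using assms by simp
  then have sab: "(\<Sum>i<n. a i) = (\<Sum>i<n. b i)" by (simp only: of_nat_eq_iff)
  have P1: "\<forall>Ma Mb :: nat. (\<forall>i<n. a i \<le> Ma) \<and> (\<forall>i<n. b i \<le> Mb) \<and>
            real ((Ma + 1) * Mb) \<le> real n * cbar \<longrightarrow> graphic n a b"
  proof (intro allI impI)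
    fix Ma Mb :: nat
    assume h: "(\<forall>i<n. a i \<le> Ma) \<and> (\<forall>i<n. b i \<le> Mb) \<and> real ((Ma + 1) * Mb) \<le> real n * cbar"
    then have "real ((Ma+1)*Mb) \<le> real (\<Sum>i<n. a i)" using assms(1) by simp
    then have "(Ma+1)*Mb \<le> (\<Sum>i<n. a i)" by (simp only: of_nat_le_iff)
    then show "graphic n a b" using main[OF sab, of Ma Mb] h by simp
  qed
  moreover have "graphic n a b" if hm: "real (max_bideg n a b) \<le> sqrt (1/4 + real n * cbar) - 1/2"
  proof -
    define m where "m = max_bideg n a b"
    have am: "\<forall>i<n. a i \<le> m \<and> b i \<le> m"
      unfolding m_def max_bideg_def by (auto intro: Max_ge)
    have pos: "0 < real m + 1/2" by simp
    have s1: "real m + 1/2 \<le> sqrt (1/4 + real n * cbar)" using hm unfolding m_def by simp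
    have nn: "0 \<le> 1/4 + real n * cbar"
    proof (rule ccontr)
      assume "\<not> 0 \<le> 1/4 + real n * cbar"
      then have "sqrt (1/4 + real n * cbar) < 0" by simp
      then show False using s1 pos by linarith
    qed
    have "(real m + 1/2)^2 \<le> (sqrt (1/4 + real n * cbar))^2"
      using s1 pos by (intro power_mono) auto
    then have "(real m + 1/2)^2 \<le> 1/4 + real n * cbar" using nn by simp
    then have "real ((m + 1) * m) \<le> real n * cbar" by (simp add: power2_eq_square algebra_simps)
    then show ?thesis using P1 am by auto
  qed
  ultimately show ?thesis by blast
qed

end
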